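(* Let $P_Z=\mathcal N(0,I)$ on $\mathbb{R}^s$ and let $\mathcal T\colon\mathbb{R}^s\to\mathbb{R}^s$ be a bi-Lipschitz diffeomorphism, i.e. $\mathrm{Lip}(\mathcal T)<\infty$ and $\mathrm{Lip}(\mathcal T^{-1})<\infty$. Let $P_1,\dots,P_{N_p}\colon\mathbb{R}^d\to\mathbb{R}^s$ be patch-extraction operators, each selecting a fixed set of $s$ distinct coordinates of $x\in\mathbb{R}^d$, such that every coordinate $k\in\{1,\dots,d\}$ is selected by at least one $P_i$. Define $$\mathrm{patchNR}(x)=\frac{1}{s}\sum_{i=1}^{N_p}-\log\big(p_{\mathcal T_\#P_Z}(P_i(x))\big),\qquad x\in\mathbb{R}^d.$$ Then for every $\rho>0$, the function $\varphi(x)=\exp(-\rho\,\mathrm{patchNR}(x))$ belongs to $L^1(\mathbb{R}^d)$.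
   Context: $\mathcal T_\#P_Z=P_Z\circ\mathcal T^{-1}$ is the push-forward of $P_Z$ under $\mathcal T$, with density $p_{\mathcal T_\#P_Z}(\mathrm p)=p_Z(\mathcal T^{-1}(\mathrm p))\,|\det(\nabla\mathcal T^{-1}(\mathrm p))|$, where $p_Z$ is the standard normal density on $\mathbb{R}^s$. Images are vectorized as elements of $\mathbb{R}^d$, patches as elements of $\mathbb{R}^s$. *)

theory Defs
  imports "HOL-Analysis.Analysis"
begin

definition std_normal_density :: "real ^ 's \<Rightarrow> real" where
  "std_normal_density z =
     (2 * pi) powr (- real CARD('s) / 2) * exp (- (norm z)\<^sup>2 / 2)"

text \<open>Density of the push-forward of N(0,I) under T, given the inverse Tinv
  and its derivative Tinv': p(y) = p_Z(Tinv y) * |det (D Tinv (y))|.\<close>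
definition pushforward_density ::
  "(real ^ 's \<Rightarrow> real ^ 's) \<Rightarrow> (real ^ 's \<Rightarrow> real ^ 's \<Rightarrow> real ^ 's)
     \<Rightarrow> real ^ 's \<Rightarrow> real" where
  "pushforward_density Tinv Tinv' y =
     std_normal_density (Tinv y) * \<bar>det (matrix (Tinv' y))\<bar>"

definition patch :: "('s \<Rightarrow> 'd) \<Rightarrow> real ^ 'd \<Rightarrow> real ^ 's" where
  "patch idx x = (\<chi> j. x $ idx j)"

definition patchNR ::
  "(real ^ 's \<Rightarrow> real ^ 's) \<Rightarrow> (real ^ 's \<Rightarrow> real ^ 's \<Rightarrow> real ^ 's)
     \<Rightarrow> nat \<Rightarrow> (nat \<Rightarrow> 's \<Rightarrow> 'd) \<Rightarrow> real ^ 'd \<Rightarrow> real" where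
  "patchNR Tinv Tinv' Np idx x =
     (1 / real CARD('s)) *
       (\<Sum>i<Np. - ln (pushforward_density Tinv Tinv' (patch (idx i) x)))"

end

theory Submission
  imports Defs "HOL-Probability.Distributions"
begin


lemma dir_limit:
  fixes f :: "'a::real_normed_vector \<Rightarrow> 'b::real_normed_vector"
  assumes d: "(f has_derivative f') (at x)" and v: "v \<noteq> 0"
  shows "(\<lambda>n. real (Suc n) *\<^sub>R (f (x + (1 / real (Suc n)) *\<^sub>R v) - f x)) \<longlonglongrightarrow> f' v"
proof -
  have bl: "bounded_linear f'" using d by (rule has_derivative_bounded_linear)
  then interpret bounded_linear f' .
  have lim0: "((\<lambda>h. norm (f (x + h) - f x - f' h) / norm h) \<longlongrightarrow> 0) (at 0)"
    using d unfolding has_derivative_at by auto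
  have hlim: "filterlim (\<lambda>n. (1 / real (Suc n)) *\<^sub>R v) (at 0) sequentially"
  proof (rule filterlim_atI)
    show "((\<lambda>n. (1 / real (Suc n)) *\<^sub>R v) \<longlongrightarrow> 0) sequentially"
      using tendsto_scaleR[OF LIMSEQ_Suc[OF lim_const_over_n[of 1]] tendsto_const[of v]]
      by simp
    show "\<forall>\<^sub>F n in sequentially. (1 / real (Suc n)) *\<^sub>R v \<noteq> 0" using v by simp
  qed
  have "((\<lambda>n. norm (f (x + (1 / real (Suc n)) *\<^sub>R v) - f x - f' ((1 / real (Suc n)) *\<^sub>R v)) / norm ((1 / real (Suc n)) *\<^sub>R v)) \<longlongrightarrow> 0) sequentially"
    using filterlim_compose[OF lim0 hlim] by (simp add: o_def)
  then have "((\<lambda>n. norm v * (norm (f (x + (1 / real (Suc n)) *\<^sub>R v) - f x - f' ((1 / real (Suc n)) *\<^sub>R v)) / norm ((1 / real (Suc n)) *\<^sub>R v))) \<longlongrightarrow> 0) sequentially"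
    using tendsto_mult_right_zero by blast
  moreover have "norm v * (norm (f (x + (1 / real (Suc n)) *\<^sub>R v) - f x - f' ((1 / real (Suc n)) *\<^sub>R v)) / norm ((1 / real (Suc n)) *\<^sub>R v))
     = norm (real (Suc n) *\<^sub>R (f (x + (1 / real (Suc n)) *\<^sub>R v) - f x) - f' v)" for n
  proof -
    define c where "c = real (Suc n)"
    have c: "c > 0" unfolding c_def by simp
    define h where "h = (1 / c) *\<^sub>R v"
    define w where "w = f (x + h) - f x - f' h"
    have fh: "c *\<^sub>R f' h = f' v" using c unfolding h_def scaleR by simp
    have "c *\<^sub>R (f (x + h) - f x) - f' v = c *\<^sub>R w"
      unfolding w_def fh[symmetric] by (simp add: algebra_simps)
    moreover have "norm h = norm v / c" using c unfolding h_def by simp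
    moreover have "norm h > 0" using v c unfolding h_def by simp
    ultimately have "norm v * (norm w / norm h) = norm (c *\<^sub>R (f (x + h) - f x) - f' v)"
      using v c by simp
    then show ?thesis unfolding w_def h_def c_def .
  qed
  ultimately have "((\<lambda>n. norm (real (Suc n) *\<^sub>R (f (x + (1 / real (Suc n)) *\<^sub>R v) - f x) - f' v)) \<longlongrightarrow> 0) sequentially"
    by simp
  then show ?thesis using tendsto_norm_zero_iff LIM_zero_cancel by (metis tendsto_norm_zero_cancel)
qed

lemma lip_deriv_bound:
  fixes f :: "'a::real_normed_vector \<Rightarrow> 'b::real_normed_vector"
  assumes d: "(f has_derivative f') (at x)" and L: "L-lipschitz_on UNIV f"
  shows "norm (f' v) \<le> L * norm v"
proof (cases "v = 0")
  case True
  have "linear f'" using d has_derivative_linear by blast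
  then show ?thesis using True by (simp add: linear_0)
next
  case False
  have "norm (real (Suc n) *\<^sub>R (f (x + (1 / real (Suc n)) *\<^sub>R v) - f x)) \<le> L * norm v" for n
  proof -
    define c where "c = real (Suc n)"
    have c: "c > 0" unfolding c_def by simp
    define h where "h = (1 / c) *\<^sub>R v"
    have "norm (f (x + h) - f x) \<le> L * norm ((x + h) - x)"
      using lipschitz_onD[OF L, of "x+h" x] by (simp add: dist_norm)
    also have "norm ((x + h) - x) = norm v / c" using c unfolding h_def by simp
    finally have "c * norm (f (x + h) - f x) \<le> L * norm v" using c by (simp add: field_simps)
    then show ?thesis using c unfolding h_def c_def by simp
  qed
  then show ?thesis
    using tendsto_norm[OF dir_limit[OF d False]]
    by (intro LIMSEQ_le_const2) auto
qed

lemma partial_meas: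
  fixes f :: "real^'n \<Rightarrow> real^'m"
  assumes d: "\<And>y. (f has_derivative f' y) (at y)" and c: "continuous_on UNIV f"
  shows "(\<lambda>y. matrix (f' y) $ i $ j) \<in> borel_measurable borel"
proof (rule borel_measurable_LIMSEQ_real)
  fix y
  show "(\<lambda>n. (real (Suc n) *\<^sub>R (f (y + (1 / real (Suc n)) *\<^sub>R axis j 1) - f y)) $ i) \<longlonglongrightarrow> matrix (f' y) $ i $ j"
    unfolding matrix_def using tendsto_vec_nth[OF dir_limit[OF d, of "axis j 1"]]
    by (simp add: axis_eq_0_iff)
next
  fix n
  show "(\<lambda>y. (real (Suc n) *\<^sub>R (f (y + (1 / real (Suc n)) *\<^sub>R axis j (1::real)) - f y)) $ i) \<in> borel_measurable borel"
    by (intro borel_measurable_continuous_onI continuous_intros continuous_on_compose2[OF c]) auto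
qed



lemma det_bound:
  fixes A :: "real^'n^'n"
  assumes b: "\<And>i j. \<bar>A $ i $ j\<bar> \<le> B"
  shows "\<bar>det A\<bar> \<le> fact CARD('n) * B ^ CARD('n)"
proof -
  have B0: "0 \<le> B" using b[of undefined undefined] by linarith
  have "\<bar>det A\<bar> \<le> (\<Sum>p\<in>{p. p permutes (UNIV::'n set)}. \<bar>of_int (sign p) * (\<Prod>i\<in>UNIV. A $ i $ p i)\<bar>)"
    unfolding det_def by (rule sum_abs)
  also have "\<dots> \<le> (\<Sum>p\<in>{p. p permutes (UNIV::'n set)}. B ^ CARD('n))"
  proof (rule sum_mono)
    fix p :: "'n \<Rightarrow> 'n"
    have "\<bar>(\<Prod>i\<in>UNIV. A $ i $ p i)\<bar> = (\<Prod>i\<in>UNIV. \<bar>A $ i $ p i\<bar>)" by (rule abs_prod)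
    also have "\<dots> \<le> (\<Prod>i\<in>(UNIV::'n set). B)" by (intro prod_mono) (auto simp: b)
    finally show "\<bar>of_int (sign p) * (\<Prod>i\<in>UNIV. A $ i $ p i)\<bar> \<le> B ^ CARD('n)"
      by (simp add: abs_mult sign_def)
  qed
  also have "\<dots> = fact CARD('n) * B ^ CARD('n)"
    by (simp add: card_permutations)
  finally show ?thesis .
qed

lemma det_meas:
  fixes f' :: "real^'n \<Rightarrow> real^'n \<Rightarrow> real^'n"
  assumes m: "\<And>i j. (\<lambda>y. matrix (f' y) $ i $ j) \<in> borel_measurable borel"
  shows "(\<lambda>y. det (matrix (f' y))) \<in> borel_measurable borel"
  unfolding det_def
  apply (rule borel_measurable_sum)
  apply (rule borel_measurable_times)
   apply simp
  apply (rule borel_measurable_prod)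
  apply (rule m)
  done

lemma det_nonzero:
  fixes T Tinv :: "real^'n \<Rightarrow> real^'n"
  assumes inv: "\<And>y. T (Tinv y) = y"
    and dT: "(T has_derivative T' (Tinv y)) (at (Tinv y))"
    and dI: "(Tinv has_derivative Tinv' y) (at y)"
  shows "det (matrix (Tinv' y)) \<noteq> 0"
proof -
  have "((T \<circ> Tinv) has_derivative (T' (Tinv y) \<circ> Tinv' y)) (at y)"
    by (rule diff_chain_at[OF dI dT])
  moreover have "T \<circ> Tinv = id" using inv by auto
  ultimately have "(id has_derivative (T' (Tinv y) \<circ> Tinv' y)) (at y)" by simp
  then have e: "T' (Tinv y) \<circ> Tinv' y = id"
    using has_derivative_unique has_derivative_id by metis
  have "linear (Tinv' y)" using dI has_derivative_linear by blast
  moreover have "linear (T' (Tinv y))" using dT has_derivative_linear by blast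
  ultimately have "matrix (T' (Tinv y) \<circ> Tinv' y) = matrix (T' (Tinv y)) ** matrix (Tinv' y)"
    by (rule matrix_compose)
  then have "matrix (T' (Tinv y)) ** matrix (Tinv' y) = mat 1"
    using e matrix_id_mat_1 by metis
  then have "det (matrix (T' (Tinv y))) * det (matrix (Tinv' y)) = 1"
    by (metis det_mul det_I)
  then show ?thesis by auto
qed

lemma gauss1:
  assumes B: "B > 0"
  shows "integrable lborel (\<lambda>t::real. exp (- B * (t - \<mu>)\<^sup>2))"
proof -
  define \<sigma> where "\<sigma> = sqrt (1 / (2 * B))"
  have s2: "\<sigma>\<^sup>2 = 1 / (2 * B)" unfolding \<sigma>_def using B by simp
  have sp: "\<sigma> > 0" unfolding \<sigma>_def using B by simp
  have "(\<lambda>t::real. exp (- B * (t - \<mu>)\<^sup>2)) = (\<lambda>t. sqrt (2 * pi * \<sigma>\<^sup>2) * normal_density \<mu> \<sigma> t)"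
  proof
    fix t
    have "sqrt (2 * pi * \<sigma>\<^sup>2) > 0" using B s2 by simp
    moreover have "-(t - \<mu>)\<^sup>2 / (2 * \<sigma>\<^sup>2) = - B * (t - \<mu>)\<^sup>2" using B s2 by simp
    ultimately show "exp (- B * (t - \<mu>)\<^sup>2) = sqrt (2 * pi * \<sigma>\<^sup>2) * normal_density \<mu> \<sigma> t"
      unfolding normal_density_def using sp by simp
  qed
  then show ?thesis using integrable_normal_density[OF sp, of \<mu>] by simp
qed

lemma gaussN:
  fixes d :: "'a::euclidean_space"
  assumes B: "B > 0"
  shows "integrable lborel (\<lambda>x::'a. exp (- B * (norm (x - d))\<^sup>2))"
proof (rule integrableI_bounded)
  show "(\<lambda>x::'a. exp (- B * (norm (x - d))\<^sup>2)) \<in> borel_measurable lborel" by measurable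
  have eq: "exp (- (B * (norm (x - d))\<^sup>2)) = (\<Prod>b\<in>Basis. exp (- (B * (x \<bullet> b - d \<bullet> b)\<^sup>2)))" for x
  proof -
    have "(norm (x - d))\<^sup>2 = (\<Sum>b\<in>Basis. (x \<bullet> b - d \<bullet> b)\<^sup>2)"
      unfolding power2_norm_eq_inner by (subst euclidean_inner) (simp add: inner_diff_left power2_eq_square)
    then show ?thesis by (simp add: exp_sum sum_distrib_left sum_negf[symmetric])
  qed
  have "(\<integral>\<^sup>+x. ennreal (norm (exp (- B * (norm (x - d))\<^sup>2))) \<partial>lborel)
      = (\<integral>\<^sup>+x. (\<Prod>b\<in>Basis. (\<lambda>b t. ennreal (exp (- B * (t - d \<bullet> b)\<^sup>2))) b (x \<bullet> b)) \<partial>lborel)"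
    by (simp add: eq prod_ennreal prod_nonneg)
  also have "\<dots> = (\<Prod>b\<in>Basis. (\<integral>\<^sup>+t. ennreal (exp (- B * (t - d \<bullet> b)\<^sup>2)) \<partial>lborel))"
    by (rule nn_integral_lborel_prod) auto
  also have "\<dots> = (\<Prod>b\<in>(Basis::'a set). ennreal (\<integral>t. exp (- B * (t - d \<bullet> b)\<^sup>2) \<partial>lborel))"
    by (intro prod.cong refl nn_integral_eq_integral gauss1[OF B]) auto
  also have "\<dots> < \<infinity>"
    by (subst prod_ennreal) (auto intro!: integral_nonneg_AE)
  finally show "(\<integral>\<^sup>+x. ennreal (norm (exp (- B * (norm (x - d))\<^sup>2))) \<partial>lborel) < \<infinity>" .
qed



lemma norm_sq_vec: "(norm (v::real^'n))\<^sup>2 = (\<Sum>i\<in>UNIV. (v $ i)\<^sup>2)"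
  unfolding power2_norm_eq_inner inner_vec_def by (simp add: power2_eq_square)

theorem proposition1:
  fixes T Tinv :: "real ^ 's \<Rightarrow> real ^ 's"
    and T' Tinv' :: "real ^ 's \<Rightarrow> real ^ 's \<Rightarrow> real ^ 's"
    and Np :: nat
    and idx :: "nat \<Rightarrow> 's \<Rightarrow> 'd::finite"
    and \<rho> :: real
  assumes bij_T: "bij T"
    and Tinv_def: "Tinv = inv T"
    and T_deriv: "\<And>x. (T has_derivative T' x) (at x)"
    and Tinv_deriv: "\<And>y. (Tinv has_derivative Tinv' y) (at y)"
    and T_lip: "\<exists>L. L-lipschitz_on UNIV T"
    and Tinv_lip: "\<exists>L. L-lipschitz_on UNIV Tinv"
    and idx_inj: "\<And>i. i < Np \<Longrightarrow> inj (idx i)"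
    and cover: "\<And>k. \<exists>i<Np. k \<in> range (idx i)"
    and rho_pos: "\<rho> > 0"
  shows "integrable lebesgue (\<lambda>x::real ^ 'd. exp (- \<rho> * patchNR Tinv Tinv' Np idx x))"
proof -
  obtain K where K: "K-lipschitz_on UNIV T" using T_lip by blast
  obtain L where L: "L-lipschitz_on UNIV Tinv" using Tinv_lip by blast
  have K0: "K \<ge> 0" using K lipschitz_on_nonneg by blast
  have L0: "L \<ge> 0" using L lipschitz_on_nonneg by blast
  define K1 where "K1 = K + 1"
  have K1: "K1 > 0" unfolding K1_def using K0 by simp
  have TT: "T (Tinv y) = y" for y
    unfolding Tinv_def using bij_T by (simp add: bij_is_surj surj_f_inv_f)
  have TT0: "Tinv (T 0) = 0"
    unfolding Tinv_def using bij_T by (simp add: bij_is_inj inv_f_f)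
  define c where "c = T 0"
  define s where "s = real CARD('s)"
  have s0: "s > 0" unfolding s_def by simp
  define D where "D = fact CARD('s) * L ^ CARD('s)"
  define C0 where "C0 = (2 * pi) powr (- real CARD('s) / 2)"
  have C0: "C0 > 0" unfolding C0_def by simp
  define a where "a = 1 / (2 * K1\<^sup>2)"
  have a0: "a > 0" unfolding a_def using K1 by simp
  define p where "p = pushforward_density Tinv Tinv'"
  have detb: "\<bar>det (matrix (Tinv' y))\<bar> \<le> D" for y
    unfolding D_def
  proof (rule det_bound)
    fix i j
    have "\<bar>matrix (Tinv' y) $ i $ j\<bar> = \<bar>Tinv' y (axis j 1) $ i\<bar>" unfolding matrix_def by simp
    also have "\<dots> \<le> norm (Tinv' y (axis j 1))" by (rule component_le_norm_cart)
    also have "\<dots> \<le> L * norm (axis j (1::real))" by (rule lip_deriv_bound[OF Tinv_deriv L])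
    finally show "\<bar>matrix (Tinv' y) $ i $ j\<bar> \<le> L" by simp
  qed
  have detnz: "det (matrix (Tinv' y)) \<noteq> 0" for y
    by (rule det_nonzero[where T=T and Tinv=Tinv and T'=T' and Tinv'=Tinv', OF TT T_deriv Tinv_deriv])
  have ppos: "p y > 0" for y
    unfolding p_def pushforward_density_def Defs.std_normal_density_def using detnz[of y] by simp
  have pbound: "ln (p y) \<le> ln (C0 * D) - a * (norm (y - c))\<^sup>2" for y
  proof -
    have "norm (y - c) = norm (T (Tinv y) - T 0)" unfolding c_def TT ..
    also have "\<dots> \<le> K * norm (Tinv y - 0)" using lipschitz_on_normD[OF K] by blast
    also have "\<dots> \<le> K1 * norm (Tinv y)" unfolding K1_def by (simp add: distrib_right)
    finally have "norm (y - c) \<le> K1 * norm (Tinv y)" .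
    then have "(norm (y - c))\<^sup>2 \<le> (K1 * norm (Tinv y))\<^sup>2" by (simp add: power_mono)
    then have "a * (norm (y - c))\<^sup>2 \<le> (norm (Tinv y))\<^sup>2 / 2"
      unfolding a_def using K1 by (simp add: field_simps power_mult_distrib)
    then have e: "exp (- (norm (Tinv y))\<^sup>2 / 2) \<le> exp (- a * (norm (y - c))\<^sup>2)" by simp
    have "p y = C0 * exp (- (norm (Tinv y))\<^sup>2 / 2) * \<bar>det (matrix (Tinv' y))\<bar>"
      unfolding p_def pushforward_density_def Defs.std_normal_density_def C0_def by simp
    also have "\<dots> \<le> C0 * exp (- a * (norm (y - c))\<^sup>2) * D"
      using e detb[of y] C0 by (intro mult_mono) auto
    also have "\<dots> = (C0 * D) * exp (- a * (norm (y - c))\<^sup>2)" by simp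
    finally have "p y \<le> (C0 * D) * exp (- a * (norm (y - c))\<^sup>2)" .
    moreover have "C0 * D > 0" using ppos[of y] \<open>p y \<le> _\<close> C0
      by (smt (verit) detb mult_pos_pos zero_less_mult_iff abs_ge_zero exp_gt_zero)
    ultimately have "ln (p y) \<le> ln ((C0 * D) * exp (- a * (norm (y - c))\<^sup>2))"
      using ppos[of y] by simp
    also have "\<dots> = ln (C0 * D) - a * (norm (y - c))\<^sup>2"
      using \<open>C0 * D > 0\<close> by (subst ln_mult) auto
    finally show ?thesis .
  qed
  obtain si sj where sel: "\<And>k. si k < Np \<and> idx (si k) (sj k) = k"
  proof -
    have "\<forall>k. \<exists>q. fst q < Np \<and> idx (fst q) (snd q) = k"
    proof
      fix k
      obtain i where i: "i < Np" "k \<in> range (idx i)" using cover[of k] by blast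
      then obtain j where "k = idx i j" by blast
      then show "\<exists>q. fst q < Np \<and> idx (fst q) (snd q) = k" using i by (intro exI[of _ "(i, j)"]) simp
    qed
    then obtain q where "\<forall>k. fst (q k) < Np \<and> idx (fst (q k)) (snd (q k)) = k" by metis
    then show ?thesis using that[of "\<lambda>k. fst (q k)" "\<lambda>k. snd (q k)"] by blast
  qed
  define dd :: "real^'d" where "dd = (\<chi> k. c $ sj k)"
  have sumb: "(norm (x - dd))\<^sup>2 \<le> (\<Sum>i<Np. (norm (patch (idx i) x - c))\<^sup>2)" for x :: "real^'d"
  proof -
    define g where "g = (\<lambda>(i, j). (x $ idx i j - c $ j)\<^sup>2)"
    define sel where "sel = (\<lambda>k. (si k, sj k))"
    have injs: "inj sel" unfolding sel_def by (metis (no_types, lifting) injI prod.inject sel)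
    have "(norm (x - dd))\<^sup>2 = (\<Sum>k\<in>UNIV. g (sel k))"
      unfolding norm_sq_vec g_def sel_def dd_def using sel by simp
    also have "\<dots> = (\<Sum>q\<in>sel ` UNIV. g q)" by (simp add: sum.reindex[OF injs])
    also have "\<dots> \<le> (\<Sum>q\<in>{..<Np} \<times> UNIV. g q)"
      by (rule sum_mono2) (auto simp: sel_def sel g_def)
    also have "\<dots> = (\<Sum>i<Np. (norm (patch (idx i) x - c))\<^sup>2)"
      unfolding norm_sq_vec g_def patch_def by (simp add: sum.cartesian_product)
    finally show ?thesis .
  qed
  define B where "B = \<rho> / s * a"
  have B0: "B > 0" unfolding B_def using rho_pos s0 a0 by simp
  define E where "E = \<rho> / s * (real Np * ln (C0 * D))"
  have bound: "exp (- \<rho> * patchNR Tinv Tinv' Np idx x) \<le> exp E * exp (- B * (norm (x - dd))\<^sup>2)" for x :: "real^'d"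
  proof -
    have "- \<rho> * patchNR Tinv Tinv' Np idx x = \<rho> / s * (\<Sum>i<Np. ln (p (patch (idx i) x)))"
      unfolding patchNR_def p_def s_def by (simp add: sum_negf)
    also have "\<dots> \<le> \<rho> / s * (\<Sum>i<Np. ln (C0 * D) - a * (norm (patch (idx i) x - c))\<^sup>2)"
      using rho_pos s0 by (intro mult_left_mono sum_mono pbound) auto
    also have "\<dots> = E - B * (\<Sum>i<Np. (norm (patch (idx i) x - c))\<^sup>2)"
      unfolding E_def B_def by (simp add: sum_subtractf sum_distrib_left[symmetric] algebra_simps)
    also have "\<dots> \<le> E - B * (norm (x - dd))\<^sup>2"
      using sumb[of x] B0 by simp
    finally have "exp (- \<rho> * patchNR Tinv Tinv' Np idx x) \<le> exp (E - B * (norm (x - dd))\<^sup>2)"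
      by simp
    also have "exp (E - B * (norm (x - dd))\<^sup>2) = exp E * exp (- B * (norm (x - dd))\<^sup>2)"
      by (metis exp_add diff_conv_add_uminus mult_minus_left)
    finally show ?thesis .
  qed
  have mT: "Tinv \<in> borel_measurable borel"
    using borel_measurable_continuous_onI lipschitz_on_continuous_on[OF L] by blast
  have mD: "(\<lambda>y. det (matrix (Tinv' y))) \<in> borel_measurable borel"
    by (intro det_meas partial_meas[where f=Tinv] Tinv_deriv lipschitz_on_continuous_on[OF L])
  have mP: "patch \<iota> \<in> borel_measurable borel" for \<iota> :: "'s \<Rightarrow> 'd"
  proof -
    have "linear (patch \<iota>)" unfolding patch_def by (intro linearI) (auto simp: vec_eq_iff)
    then show ?thesis using borel_measurable_continuous_onI linear_continuous_on linear_conv_bounded_linear by blast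
  qed
  note [measurable] = mT mD mP
  have meas: "(\<lambda>x::real ^ 'd. exp (- \<rho> * patchNR Tinv Tinv' Np idx x)) \<in> borel_measurable lborel"
    unfolding patchNR_def pushforward_density_def Defs.std_normal_density_def by measurable
  have "integrable lborel (\<lambda>x::real ^ 'd. exp (- \<rho> * patchNR Tinv Tinv' Np idx x))"
  proof (rule Bochner_Integration.integrable_bound)
    show "integrable lborel (\<lambda>x::real^'d. exp E * exp (- B * (norm (x - dd))\<^sup>2))"
      using gaussN[OF B0, of dd] by simp
    show "(\<lambda>x::real ^ 'd. exp (- \<rho> * patchNR Tinv Tinv' Np idx x)) \<in> borel_measurable lborel" by (rule meas)
    show "AE x in lborel. norm (exp (- \<rho> * patchNR Tinv Tinv' Np idx x)) \<le> norm (exp E * exp (- B * (norm (x - dd))\<^sup>2))"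
      using bound by simp
  qed
  then show ?thesis using meas by (subst integrable_completion) auto
qed
end
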